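(* Let $G=(V_1,\ldots,V_p,E)$ be a finite $p$-partite graph viewed as a network in which each vertex is a node that can send messages to its neighbors, and let $k_1,\ldots,k_p$ be nonnegative integers. If every node runs the distributed peeling protocol described in the context with threshold $k(v)=k_i$ for $v\in V_i$, then once no messages remain in transit, the subgraph of $G$ induced by the nodes that are still active equals $G(k_1,\ldots,k_p)$.
   Context: A $p$-partite graph $G=(V_1,\ldots,V_p,E)$ has vertex set partitioned into disjoint sets $V_1,\ldots,V_p$ with no edges inside any $V_i$. $G(k_1,\ldots,k_p)$ denotes the largest subgraph of $G$ in which every vertex of $V_i$ has degree at least $k_i$ for every $i$ (unique, possibly empty). Distributed peeling protocol with thresholds $k(v)$: each node $v$ keeps a counter $degree$, initialized to $\deg_G(v)$, and a status, initially active. Initially, if $degree<k(v)$, node $v$ sends an "off" message to each of its neighbors and becomes inactive. An active node, upon receiving a message, sets $degree=degree-1$; if then $degree<k(v)$, it sends an "off" message to each of its neighbors and becomes inactive. An inactive node remains inactive and ignores all incoming messages. *)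

theory Defs
  imports Main "HOL-Library.Multiset"
begin

definition finite_graph :: "'a set \<Rightarrow> ('a \<times> 'a) set \<Rightarrow> bool" where
  "finite_graph V E \<longleftrightarrow> finite V \<and> E \<subseteq> V \<times> V \<and> sym E \<and> irrefl E"

(* p-partite: part assigns to each vertex its class index in {1..p};
   no edge joins two vertices of the same class. V_i = {v \<in> V. part v = i}. *)
definition p_partite :: "nat \<Rightarrow> 'a set \<Rightarrow> ('a \<times> 'a) set \<Rightarrow> ('a \<Rightarrow> nat) \<Rightarrow> bool" where
  "p_partite p V E part \<longleftrightarrow> finite_graph V E \<and> (\<forall>v\<in>V. part v \<in> {1..p})
     \<and> (\<forall>(u,v)\<in>E. part u \<noteq> part v)"

definition nbrs :: "('a \<times> 'a) set \<Rightarrow> 'a \<Rightarrow> 'a set" where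
  "nbrs E v = {u. (v,u) \<in> E}"

definition is_subgraph :: "'a set \<Rightarrow> ('a \<times> 'a) set \<Rightarrow> 'a set \<times> ('a \<times> 'a) set \<Rightarrow> bool" where
  "is_subgraph V E H \<longleftrightarrow> fst H \<subseteq> V \<and> snd H \<subseteq> E \<and> snd H \<subseteq> fst H \<times> fst H \<and> sym (snd H)"

definition deg_ok_subgraph ::
  "'a set \<Rightarrow> ('a \<times> 'a) set \<Rightarrow> ('a \<Rightarrow> nat) \<Rightarrow> (nat \<Rightarrow> nat) \<Rightarrow> 'a set \<times> ('a \<times> 'a) set \<Rightarrow> bool" where
  "deg_ok_subgraph V E part kk H \<longleftrightarrow> is_subgraph V E H \<and>
     (\<forall>v\<in>fst H. card (nbrs (snd H) v) \<ge> kk (part v))"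

definition subgraph_le :: "'a set \<times> ('a \<times> 'a) set \<Rightarrow> 'a set \<times> ('a \<times> 'a) set \<Rightarrow> bool" where
  "subgraph_le H H' \<longleftrightarrow> fst H \<subseteq> fst H' \<and> snd H \<subseteq> snd H'"

definition G_core ::
  "'a set \<Rightarrow> ('a \<times> 'a) set \<Rightarrow> ('a \<Rightarrow> nat) \<Rightarrow> (nat \<Rightarrow> nat) \<Rightarrow> 'a set \<times> ('a \<times> 'a) set" where
  "G_core V E part kk = (THE H. deg_ok_subgraph V E part kk H \<and>
      (\<forall>H'. deg_ok_subgraph V E part kk H' \<longrightarrow> subgraph_le H' H))"

definition induced :: "('a \<times> 'a) set \<Rightarrow> 'a set \<Rightarrow> 'a set \<times> ('a \<times> 'a) set" where
  "induced E S = (S, E \<inter> (S \<times> S))"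

(* Protocol state: per-node status (True = active), per-node degree counter,
   and the multiset of "off" messages in transit, each a pair (sender, receiver). *)
record 'a pstate =
  active :: "'a \<Rightarrow> bool"
  degc   :: "'a \<Rightarrow> int"
  transit :: "('a \<times> 'a) multiset"

definition off_msgs :: "'a set \<Rightarrow> ('a \<times> 'a) set \<Rightarrow> 'a \<Rightarrow> ('a \<times> 'a) multiset" where
  "off_msgs V E v = mset_set {(v,u) | u. u \<in> V \<and> (v,u) \<in> E}"

definition init_state :: "'a set \<Rightarrow> ('a \<times> 'a) set \<Rightarrow> ('a \<Rightarrow> nat) \<Rightarrow> 'a pstate" where
  "init_state V E k =
     \<lparr> active = (\<lambda>v. \<not> (int (card (nbrs E v)) < int (k v))),
       degc = (\<lambda>v. int (card (nbrs E v))),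
       transit = (\<Sum>v\<in>{v\<in>V. int (card (nbrs E v)) < int (k v)}. off_msgs V E v) \<rparr>"

definition deliver :: "'a set \<Rightarrow> ('a \<times> 'a) set \<Rightarrow> ('a \<Rightarrow> nat) \<Rightarrow> ('a \<times> 'a) \<Rightarrow> 'a pstate \<Rightarrow> 'a pstate" where
  "deliver V E k m s =
     (let w = snd m; s0 = s\<lparr>transit := transit s - {#m#}\<rparr> in
      if \<not> active s w then s0
      else let d = degc s w - 1 in
        if d < int (k w) then
          s0\<lparr>degc := (degc s)(w := d), active := (active s)(w := False),
             transit := transit s0 + off_msgs V E w\<rparr>
        else s0\<lparr>degc := (degc s)(w := d)\<rparr>)"

definition pstep :: "'a set \<Rightarrow> ('a \<times> 'a) set \<Rightarrow> ('a \<Rightarrow> nat) \<Rightarrow> 'a pstate \<Rightarrow> 'a pstate \<Rightarrow> bool" where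
  "pstep V E k s t \<longleftrightarrow> (\<exists>m. m \<in># transit s \<and> t = deliver V E k m s)"

definition reachable :: "'a set \<Rightarrow> ('a \<times> 'a) set \<Rightarrow> ('a \<Rightarrow> nat) \<Rightarrow> 'a pstate \<Rightarrow> bool" where
  "reachable V E k s \<longleftrightarrow> (pstep V E k)\<^sup>*\<^sup>* (init_state V E k) s"

end

theory Submission
  imports Defs
begin

definition tc :: "'a pstate \<Rightarrow> 'a \<Rightarrow> nat" where
  "tc s v = count (image_mset snd (transit s)) v"

definition Inv :: "'a set \<Rightarrow> ('a \<times> 'a) set \<Rightarrow> ('a \<Rightarrow> nat) \<Rightarrow> 'a pstate \<Rightarrow> bool" where
  "Inv V E k s \<longleftrightarrow> (\<forall>v. active s v \<longrightarrow> int (k v) \<le> degc s v) \<and>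
     (\<forall>v\<in>V. active s v \<longrightarrow> degc s v = int (card {u\<in>nbrs E v. active s u}) + int (tc s v))"

lemma fin_nbrs: "finite_graph V E \<Longrightarrow> finite (nbrs E v)"
  unfolding finite_graph_def nbrs_def
  by (rule finite_subset[of _ V]) auto

lemma nbrs_V: "finite_graph V E \<Longrightarrow> nbrs E v \<subseteq> V"
  unfolding finite_graph_def nbrs_def by auto

lemma count_off:
  assumes "finite_graph V E"
  shows "count (image_mset snd (off_msgs V E w)) v = (if (w,v) \<in> E then 1 else 0)"
proof -
  have fin: "finite {(w,u) | u. u \<in> V \<and> (w,u) \<in> E}"
    using assms unfolding finite_graph_def
    by (rule_tac finite_subset[of _ "V \<times> V"]) auto
  have inj: "inj_on snd {(w,u) | u. u \<in> V \<and> (w,u) \<in> E}" by (auto simp: inj_on_def)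
  have "image_mset snd (off_msgs V E w) = mset_set (snd ` {(w,u) | u. u \<in> V \<and> (w,u) \<in> E})"
    unfolding off_msgs_def using image_mset_mset_set[OF inj] by simp
  moreover have "snd ` {(w,u) | u. u \<in> V \<and> (w,u) \<in> E} = {u. u \<in> V \<and> (w,u) \<in> E}" by force
  moreover have "finite {u. u \<in> V \<and> (w,u) \<in> E}"
    using assms unfolding finite_graph_def by auto
  ultimately show ?thesis using assms unfolding finite_graph_def by auto
qed

lemma image_mset_sum_set: "image_mset f (\<Sum>x\<in>A. g x) = (\<Sum>x\<in>A. image_mset f (g x))"
  by (induction A rule: infinite_finite_induct) auto

lemma Inv_init:
  assumes g: "finite_graph V E"
  shows "Inv V E k (init_state V E k)"
proof -
  let ?I = "{v\<in>V. int (card (nbrs E v)) < int (k v)}"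
  have "\<And>v. v \<in> V \<Longrightarrow> card (nbrs E v) = card {u\<in>nbrs E v. \<not> (int (card (nbrs E u)) < int (k u))}
        + count (image_mset snd (transit (init_state V E k))) v"
  proof -
    fix v assume v: "v \<in> V"
    have "count (image_mset snd (transit (init_state V E k))) v
        = (\<Sum>u\<in>?I. count (image_mset snd (off_msgs V E u)) v)"
      by (simp add: init_state_def image_mset_sum_set count_sum)
    also have "\<dots> = (\<Sum>u\<in>?I. if (u,v) \<in> E then 1 else 0)"
      using count_off[OF g] by simp
    also have "\<dots> = card {u\<in>?I. (u,v) \<in> E}"
      using g unfolding finite_graph_def by (simp add: sum.If_cases Int_def conj_commute)
    also have "{u\<in>?I. (u,v) \<in> E} = {u\<in>nbrs E v. int (card (nbrs E u)) < int (k u)}"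
      using g unfolding finite_graph_def nbrs_def sym_def by auto
    finally have 1: "count (image_mset snd (transit (init_state V E k))) v =
       card {u\<in>nbrs E v. int (card (nbrs E u)) < int (k u)}" .
    have "card (nbrs E v) = card {u\<in>nbrs E v. \<not> (int (card (nbrs E u)) < int (k u))}
        + card {u\<in>nbrs E v. int (card (nbrs E u)) < int (k u)}"
      using fin_nbrs[OF g, of v]
      by (subst card_Un_disjoint[symmetric]) (auto intro: arg_cong[where f=card])
    with 1 show "card (nbrs E v) = card {u\<in>nbrs E v. \<not> (int (card (nbrs E u)) < int (k u))}
        + count (image_mset snd (transit (init_state V E k))) v" by simp
  qed
  then show ?thesis unfolding Inv_def tc_def
    by (auto simp: init_state_def)
qed

lemma Inv_step:
  assumes g: "finite_graph V E" and I: "Inv V E k s" and m: "m \<in># transit s"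
  shows "Inv V E k (deliver V E k m s)"
proof -
  obtain u w where mw: "m = (u,w)" by (cases m)
  have tcm: "tc (s\<lparr>transit := transit s - {#m#}\<rparr>) v = tc s v - (if v = w then 1 else 0)" for v
    using m mw unfolding tc_def by (auto simp: image_mset_Diff)
  have tcpos: "tc s w \<ge> 1"
  proof -
    have "w \<in># image_mset snd (transit s)" using m mw by (metis image_eqI set_image_mset snd_conv)
    then show ?thesis by (simp add: tc_def Suc_le_eq)
  qed
  show ?thesis
  proof (cases "active s w")
    case False
    have eq: "deliver V E k m s = s\<lparr>transit := transit s - {#m#}\<rparr>"
      using False by (simp add: deliver_def Let_def mw)
    show ?thesis unfolding Inv_def eq
    proof (intro conjI allI ballI impI)
      fix v assume "active (s\<lparr>transit := transit s - {#m#}\<rparr>) v"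
      then show "int (k v) \<le> degc (s\<lparr>transit := transit s - {#m#}\<rparr>) v"
        using I unfolding Inv_def by auto
    next
      fix v assume v: "v \<in> V" "active (s\<lparr>transit := transit s - {#m#}\<rparr>) v"
      then have "v \<noteq> w" "active s v" using False by auto
      then show "degc (s\<lparr>transit := transit s - {#m#}\<rparr>) v =
         int (card {u \<in> nbrs E v. active (s\<lparr>transit := transit s - {#m#}\<rparr>) u}) +
         int (tc (s\<lparr>transit := transit s - {#m#}\<rparr>) v)"
        unfolding tcm using I v unfolding Inv_def by auto
    qed
  next
    case act: True
    show ?thesis
    proof (cases "degc s w - 1 < int (k w)")
      case False
      have eq: "deliver V E k m s = s\<lparr>transit := transit s - {#m#}, degc := (degc s)(w := degc s w - 1)\<rparr>"
        using act False by (simp add: deliver_def Let_def mw)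
      show ?thesis unfolding Inv_def eq
      proof (intro conjI allI ballI impI)
        fix v assume "active (s\<lparr>transit := transit s - {#m#}, degc := (degc s)(w := degc s w - 1)\<rparr>) v"
        then show "int (k v) \<le> degc (s\<lparr>transit := transit s - {#m#}, degc := (degc s)(w := degc s w - 1)\<rparr>) v"
          using I False unfolding Inv_def by auto
      next
        fix v assume v: "v \<in> V" "active (s\<lparr>transit := transit s - {#m#}, degc := (degc s)(w := degc s w - 1)\<rparr>) v"
        have t: "tc (s\<lparr>transit := transit s - {#m#}, degc := (degc s)(w := degc s w - 1)\<rparr>) v
           = tc (s\<lparr>transit := transit s - {#m#}\<rparr>) v" unfolding tc_def by simp
        show "degc (s\<lparr>transit := transit s - {#m#}, degc := (degc s)(w := degc s w - 1)\<rparr>) v =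
         int (card {u \<in> nbrs E v. active (s\<lparr>transit := transit s - {#m#}, degc := (degc s)(w := degc s w - 1)\<rparr>) u}) +
         int (tc (s\<lparr>transit := transit s - {#m#}, degc := (degc s)(w := degc s w - 1)\<rparr>) v)"
          unfolding t tcm using I v tcpos unfolding Inv_def by auto
      qed
    next
      case True
      define s' where "s' = s\<lparr>transit := transit s - {#m#} + off_msgs V E w,
            degc := (degc s)(w := degc s w - 1), active := (active s)(w := False)\<rparr>"
      have eq: "deliver V E k m s = s'"
        using act True by (simp add: deliver_def Let_def mw s'_def)
      have tc': "tc s' v = tc s v - (if v = w then 1 else 0) + (if (w,v) \<in> E then 1 else 0)" for v
        using tcm[of v] count_off[OF g, of w v] unfolding tc_def s'_def by simp
      show ?thesis unfolding Inv_def eq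
      proof (intro conjI allI ballI impI)
        fix v assume "active s' v"
        then show "int (k v) \<le> degc s' v"
          using I unfolding Inv_def s'_def by auto
      next
        fix v assume v: "v \<in> V" "active s' v"
        then have vw: "v \<noteq> w" "active s v" unfolding s'_def by (auto split: if_splits)
        have c: "{u \<in> nbrs E v. active s' u} = {u \<in> nbrs E v. active s u} - {w}"
          unfolding s'_def by auto
        have fin: "finite {u \<in> nbrs E v. active s u}" using fin_nbrs[OF g, of v] by simp
        have wE: "(w,v) \<in> E \<longleftrightarrow> w \<in> {u \<in> nbrs E v. active s u}"
          using g act unfolding finite_graph_def nbrs_def sym_def by auto
        have "degc s' v = degc s v" using vw unfolding s'_def by simp
        also have "\<dots> = int (card {u\<in>nbrs E v. active s u}) + int (tc s v)"
          using I v vw unfolding Inv_def by auto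
        also have "\<dots> = int (card {u \<in> nbrs E v. active s' u}) + int (tc s' v)"
          unfolding c tc' using vw wE fin card_gt_0_iff[of "{u \<in> nbrs E v. active s u}"]
          by (cases "(w,v) \<in> E") (auto simp: card_Diff_singleton)
        finally show "degc s' v = int (card {u \<in> nbrs E v. active s' u}) + int (tc s' v)" .
      qed
    qed
  qed
qed

lemma Inv_reach:
  assumes g: "finite_graph V E" and r: "reachable V E k s"
  shows "Inv V E k s"
  using r unfolding reachable_def
proof (induction rule: rtranclp_induct)
  case base then show ?case using Inv_init[OF g] .
next
  case (step a b) then show ?case using Inv_step[OF g] unfolding pstep_def by blast
qed

definition okH :: "'a set \<Rightarrow> ('a \<times> 'a) set \<Rightarrow> ('a \<Rightarrow> nat) \<Rightarrow> 'a set \<times> ('a \<times> 'a) set \<Rightarrow> bool" where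
  "okH V E k H \<longleftrightarrow> is_subgraph V E H \<and> (\<forall>v\<in>fst H. card (nbrs (snd H) v) \<ge> k v)"

lemma okH_card:
  assumes g: "finite_graph V E" and H: "okH V E k H" and v: "v \<in> fst H"
    and A: "\<forall>x\<in>fst H. active s x"
  shows "k v \<le> card {u\<in>nbrs E v. active s u}"
proof -
  have "nbrs (snd H) v \<subseteq> {u\<in>nbrs E v. active s u}"
    using H A unfolding okH_def is_subgraph_def nbrs_def by auto
  moreover have "finite {u\<in>nbrs E v. active s u}" using fin_nbrs[OF g, of v] by simp
  ultimately have "card (nbrs (snd H) v) \<le> card {u\<in>nbrs E v. active s u}" by (rule card_mono[rotated])
  then show ?thesis using H v unfolding okH_def by auto
qed

lemma Max_reach:
  assumes g: "finite_graph V E" and r: "reachable V E k s" and H: "okH V E k H"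
  shows "\<forall>x\<in>fst H. active s x"
  using r unfolding reachable_def
proof (induction rule: rtranclp_induct)
  case base
  show ?case
  proof
    fix v assume v: "v \<in> fst H"
    have "nbrs (snd H) v \<subseteq> nbrs E v" using H unfolding okH_def is_subgraph_def nbrs_def by auto
    then have "card (nbrs (snd H) v) \<le> card (nbrs E v)" using fin_nbrs[OF g] card_mono by blast
    then show "active (init_state V E k) v" using H v unfolding okH_def init_state_def by auto
  qed
next
  case (step a b)
  then obtain m where m: "m \<in># transit a" and b: "b = deliver V E k m a" unfolding pstep_def by blast
  have I: "Inv V E k a" using Inv_reach[OF g] step(1) unfolding reachable_def by blast
  obtain u w where mw: "m = (u,w)" by (cases m)
  have tcpos: "tc a w \<ge> 1"
  proof -
    have "w \<in># image_mset snd (transit a)" using m mw by (metis image_eqI set_image_mset snd_conv)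
    then show ?thesis by (simp add: tc_def Suc_le_eq)
  qed
  show ?case
  proof
    fix v assume v: "v \<in> fst H"
    have av: "active a v" using step.IH v by blast
    show "active b v"
    proof (rule ccontr)
      assume nb: "\<not> active b v"
      then have vw: "v = w" and d: "degc a w - 1 < int (k w)"
        using av unfolding b deliver_def Let_def mw by (auto split: if_splits)
      have vV: "v \<in> V" using H v unfolding okH_def is_subgraph_def by auto
      have "k v \<le> card {u\<in>nbrs E v. active a u}" using okH_card[OF g H v step.IH] .
      moreover have "degc a v = int (card {u\<in>nbrs E v. active a u}) + int (tc a v)"
        using I vV av unfolding Inv_def by auto
      ultimately show False using d vw tcpos by simp
    qed
  qed
qed

theorem corollary4:
  fixes p :: nat and V :: "'a set" and E :: "('a \<times> 'a) set"
    and part :: "'a \<Rightarrow> nat" and kk :: "nat \<Rightarrow> nat" and s :: "'a pstate"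
  assumes "p_partite p V E part"
    and "reachable V E (\<lambda>v. kk (part v)) s"
    and "transit s = {#}"
  shows "induced E {v \<in> V. active s v} = G_core V E part kk"
proof -
  have g: "finite_graph V E" using assms(1) unfolding p_partite_def by auto
  let ?k = "\<lambda>v. kk (part v)"
  let ?A = "{v \<in> V. active s v}"
  have okeq: "deg_ok_subgraph V E part kk H = okH V E ?k H" for H
    unfolding deg_ok_subgraph_def okH_def by simp
  have I: "Inv V E ?k s" using Inv_reach[OF g assms(2)] .
  have D: "deg_ok_subgraph V E part kk (induced E ?A)"
    unfolding deg_ok_subgraph_def
  proof (intro conjI ballI)
    show "is_subgraph V E (induced E ?A)"
      using g unfolding is_subgraph_def induced_def finite_graph_def sym_def by auto
  next
    fix v assume v: "v \<in> fst (induced E ?A)"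
    then have vV: "v \<in> V" "active s v" unfolding induced_def by auto
    have n: "nbrs (snd (induced E ?A)) v = {u\<in>nbrs E v. active s u}"
      using g vV unfolding induced_def nbrs_def finite_graph_def by auto
    have "degc s v = int (card {u\<in>nbrs E v. active s u}) + int (tc s v)"
      "int (?k v) \<le> degc s v" using I vV unfolding Inv_def by auto
    moreover have "tc s v = 0" using assms(3) unfolding tc_def by simp
    ultimately show "?k v \<le> card (nbrs (snd (induced E ?A)) v)" unfolding n by simp
  qed
  have M: "subgraph_le H' (induced E ?A)" if "deg_ok_subgraph V E part kk H'" for H'
  proof -
    have H: "okH V E ?k H'" using that okeq by simp
    have "\<forall>x\<in>fst H'. active s x" using Max_reach[OF g assms(2) H] .
    then show ?thesis using H unfolding okH_def is_subgraph_def subgraph_le_def induced_def by auto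
  qed
  show ?thesis unfolding G_core_def
  proof (rule the_equality[symmetric])
    show "deg_ok_subgraph V E part kk (induced E ?A) \<and>
      (\<forall>H'. deg_ok_subgraph V E part kk H' \<longrightarrow> subgraph_le H' (induced E ?A))" using D M by blast
  next
    fix H assume a: "deg_ok_subgraph V E part kk H \<and>
      (\<forall>H'. deg_ok_subgraph V E part kk H' \<longrightarrow> subgraph_le H' H)"
    have "subgraph_le (induced E ?A) H" using a D by blast
    moreover have "subgraph_le H (induced E ?A)" using a M by blast
    ultimately have "subgraph_le (induced E ?A) H" "subgraph_le H (induced E ?A)" by auto
    then show "H = induced E ?A" unfolding subgraph_le_def by (auto intro: prod_eqI)
  qed
qed

end
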